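(* There exists a (finite, eight-element) left-residuated po-groupoid $\mathbf G$ which satisfies the divisibility law $(x/y)\cdot y=(y/x)\cdot x$ and the double negation law $\neg\neg x=x$, but does not satisfy the equation $x\cdot y=\neg(\neg x/y)$, and for which $\mathbf A(\mathbf G)=(G,\oplus,\neg,0)$ with $x\oplus y=\neg(\neg x\cdot\neg y)$ is not a basic algebra (it violates $\neg(\neg x\oplus y)\oplus y=\neg(\neg y\oplus x)\oplus x$).
   Context: A (bounded integral) left-residuated po-groupoid is a structure $\mathbf G=(G,\le,\cdot,/,0,1)$ where $(G,\le,0,1)$ is a bounded poset with least element $0$ and greatest element $1$, $\cdot$ is a binary operation on $G$ with $1\cdot x=x\cdot 1=x$ for all $x$ (no associativity, commutativity or monotonicity is assumed), and $/$ is a binary operation on $G$ satisfying the left residuation law: for all $x,y,z\in G$, $x\cdot y\le z\iff x\le z/y$. The negation is $\neg x:=0/x$. A basic algebra is an algebra $(A,\oplus,\neg,0)$ of type $(2,1,0)$ satisfying $x\oplus 0=x$; $\neg\neg x=x$; $\neg(\neg x\oplus y)\oplus y=\neg(\neg y\oplus x)\oplus x$; $\neg(\neg(\neg(x\oplus y)\oplus y)\oplus z)\oplus(x\oplus z)=\neg 0$. *)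

theory Defs
  imports Main
begin

text \<open>A bounded integral left-residuated po-groupoid, given on a carrier set G
  with order le, multiplication m, left residuation r (x/y = r x y),
  least element z (0) and greatest element u (1).
  No associativity, commutativity or monotonicity is assumed.\<close>

definition lr_po_groupoid ::
  "'a set \<Rightarrow> ('a \<Rightarrow> 'a \<Rightarrow> bool) \<Rightarrow> ('a \<Rightarrow> 'a \<Rightarrow> 'a) \<Rightarrow> ('a \<Rightarrow> 'a \<Rightarrow> 'a) \<Rightarrow> 'a \<Rightarrow> 'a \<Rightarrow> bool"
where
  "lr_po_groupoid G le m r z u \<longleftrightarrow>
     z \<in> G \<and> u \<in> G \<and>
     (\<forall>x\<in>G. \<forall>y\<in>G. m x y \<in> G \<and> r x y \<in> G) \<and>
     (\<forall>x\<in>G. le x x) \<and>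
     (\<forall>x\<in>G. \<forall>y\<in>G. le x y \<and> le y x \<longrightarrow> x = y) \<and>
     (\<forall>x\<in>G. \<forall>y\<in>G. \<forall>w\<in>G. le x y \<and> le y w \<longrightarrow> le x w) \<and>
     (\<forall>x\<in>G. le z x \<and> le x u) \<and>
     (\<forall>x\<in>G. m u x = x \<and> m x u = x) \<and>
     (\<forall>x\<in>G. \<forall>y\<in>G. \<forall>w\<in>G. le (m x y) w \<longleftrightarrow> le x (r w y))"

definition basic_algebra ::
  "'a set \<Rightarrow> ('a \<Rightarrow> 'a \<Rightarrow> 'a) \<Rightarrow> ('a \<Rightarrow> 'a) \<Rightarrow> 'a \<Rightarrow> bool"
where
  "basic_algebra A p n e \<longleftrightarrow>
     e \<in> A \<and> (\<forall>x\<in>A. n x \<in> A) \<and> (\<forall>x\<in>A. \<forall>y\<in>A. p x y \<in> A) \<and>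
     (\<forall>x\<in>A. p x e = x) \<and>
     (\<forall>x\<in>A. n (n x) = x) \<and>
     (\<forall>x\<in>A. \<forall>y\<in>A. p (n (p (n x) y)) y = p (n (p (n y) x)) x) \<and>
     (\<forall>x\<in>A. \<forall>y\<in>A. \<forall>w\<in>A.
        p (n (p (n (p (n (p x y)) y)) w)) (p x w) = n e)"

end

theory Submission
  imports Defs
begin

datatype e = A0 | A1 | A2 | A3 | A4 | A5 | A6 | A7

primrec toN :: "e \<Rightarrow> nat" where
    "toN A0 = 0"
  | "toN A1 = 1"
  | "toN A2 = 2"
  | "toN A3 = 3"
  | "toN A4 = 4"
  | "toN A5 = 5"
  | "toN A6 = 6"
  | "toN A7 = 7"

definition ofN :: "nat \<Rightarrow> e" where "ofN n = (if n = 0 then A0 else if n = 1 then A1 else if n = 2 then A2 else if n = 3 then A3 else if n = 4 then A4 else if n = 5 then A5 else if n = 6 then A6 else A7)"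

lemma[simp]: "ofN (toN x) = x" by (cases x) (simp_all add: ofN_def)

lemma all_e: "(\<forall>x. P x) \<longleftrightarrow> P A0 \<and> P A1 \<and> P A2 \<and> P A3 \<and> P A4 \<and> P A5 \<and> P A6 \<and> P A7"
  by (metis e.exhaust)

lemma ex_e: "(\<exists>x. P x) \<longleftrightarrow> P A0 \<or> P A1 \<or> P A2 \<or> P A3 \<or> P A4 \<or> P A5 \<or> P A6 \<or> P A7"
  by (metis e.exhaust)

lemma G_range: "{0..<8::nat} = range toN"
proof
  show "range toN \<subseteq> {0..<8}" proof
    fix n assume "n \<in> range toN"
    then obtain x where "n = toN x" by blast
    then show "n \<in> {0..<8}" by (cases x) auto
  qed
next
  show "{0..<8} \<subseteq> range toN"
  proof
    fix n assume "n \<in> {0..<8::nat}"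
    then have "n = 0 \<or> n = 1 \<or> n = 2 \<or> n = 3 \<or> n = 4 \<or> n = 5 \<or> n = 6 \<or> n = 7" by auto
    then show "n \<in> range toN" by (metis rangeI toN.simps)
  qed
qed

lemma ball_G: "(\<forall>x\<in>{0..<8::nat}. P x) \<longleftrightarrow> (\<forall>e. P (toN e))" by (simp add: G_range)
lemma bex_G: "(\<exists>x\<in>{0..<8::nat}. P x) \<longleftrightarrow> (\<exists>e. P (toN e))" by (simp add: G_range)

definition mE :: "e \<Rightarrow> e \<Rightarrow> e" where
  "mE x y = (case x of
    A0 \<Rightarrow> (case y of A0 \<Rightarrow> A0 | A1 \<Rightarrow> A0 | A2 \<Rightarrow> A0 | A3 \<Rightarrow> A0 | A4 \<Rightarrow> A0 | A5 \<Rightarrow> A0 | A6 \<Rightarrow> A0 | A7 \<Rightarrow> A0)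
  | A1 \<Rightarrow> (case y of A0 \<Rightarrow> A0 | A1 \<Rightarrow> A4 | A2 \<Rightarrow> A3 | A3 \<Rightarrow> A3 | A4 \<Rightarrow> A0 | A5 \<Rightarrow> A6 | A6 \<Rightarrow> A6 | A7 \<Rightarrow> A1)
  | A2 \<Rightarrow> (case y of A0 \<Rightarrow> A0 | A1 \<Rightarrow> A5 | A2 \<Rightarrow> A2 | A3 \<Rightarrow> A4 | A4 \<Rightarrow> A4 | A5 \<Rightarrow> A5 | A6 \<Rightarrow> A0 | A7 \<Rightarrow> A2)
  | A3 \<Rightarrow> (case y of A0 \<Rightarrow> A0 | A1 \<Rightarrow> A6 | A2 \<Rightarrow> A2 | A3 \<Rightarrow> A0 | A4 \<Rightarrow> A4 | A5 \<Rightarrow> A5 | A6 \<Rightarrow> A0 | A7 \<Rightarrow> A3)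
  | A4 \<Rightarrow> (case y of A0 \<Rightarrow> A0 | A1 \<Rightarrow> A0 | A2 \<Rightarrow> A3 | A3 \<Rightarrow> A0 | A4 \<Rightarrow> A0 | A5 \<Rightarrow> A6 | A6 \<Rightarrow> A0 | A7 \<Rightarrow> A4)
  | A5 \<Rightarrow> (case y of A0 \<Rightarrow> A0 | A1 \<Rightarrow> A4 | A2 \<Rightarrow> A4 | A3 \<Rightarrow> A3 | A4 \<Rightarrow> A0 | A5 \<Rightarrow> A0 | A6 \<Rightarrow> A6 | A7 \<Rightarrow> A5)
  | A6 \<Rightarrow> (case y of A0 \<Rightarrow> A0 | A1 \<Rightarrow> A4 | A2 \<Rightarrow> A0 | A3 \<Rightarrow> A3 | A4 \<Rightarrow> A0 | A5 \<Rightarrow> A0 | A6 \<Rightarrow> A6 | A7 \<Rightarrow> A6)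
  | A7 \<Rightarrow> (case y of A0 \<Rightarrow> A0 | A1 \<Rightarrow> A1 | A2 \<Rightarrow> A2 | A3 \<Rightarrow> A3 | A4 \<Rightarrow> A4 | A5 \<Rightarrow> A5 | A6 \<Rightarrow> A6 | A7 \<Rightarrow> A7))"

definition rE :: "e \<Rightarrow> e \<Rightarrow> e" where
  "rE x y = (case x of
    A0 \<Rightarrow> (case y of A0 \<Rightarrow> A7 | A1 \<Rightarrow> A4 | A2 \<Rightarrow> A6 | A3 \<Rightarrow> A3 | A4 \<Rightarrow> A1 | A5 \<Rightarrow> A5 | A6 \<Rightarrow> A2 | A7 \<Rightarrow> A0)
  | A1 \<Rightarrow> (case y of A0 \<Rightarrow> A7 | A1 \<Rightarrow> A7 | A2 \<Rightarrow> A5 | A3 \<Rightarrow> A2 | A4 \<Rightarrow> A7 | A5 \<Rightarrow> A7 | A6 \<Rightarrow> A7 | A7 \<Rightarrow> A1)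
  | A2 \<Rightarrow> (case y of A0 \<Rightarrow> A7 | A1 \<Rightarrow> A1 | A2 \<Rightarrow> A7 | A3 \<Rightarrow> A7 | A4 \<Rightarrow> A7 | A5 \<Rightarrow> A5 | A6 \<Rightarrow> A2 | A7 \<Rightarrow> A2)
  | A3 \<Rightarrow> (case y of A0 \<Rightarrow> A7 | A1 \<Rightarrow> A1 | A2 \<Rightarrow> A1 | A3 \<Rightarrow> A7 | A4 \<Rightarrow> A7 | A5 \<Rightarrow> A5 | A6 \<Rightarrow> A2 | A7 \<Rightarrow> A3)
  | A4 \<Rightarrow> (case y of A0 \<Rightarrow> A7 | A1 \<Rightarrow> A1 | A2 \<Rightarrow> A5 | A3 \<Rightarrow> A2 | A4 \<Rightarrow> A7 | A5 \<Rightarrow> A5 | A6 \<Rightarrow> A2 | A7 \<Rightarrow> A4)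
  | A5 \<Rightarrow> (case y of A0 \<Rightarrow> A7 | A1 \<Rightarrow> A2 | A2 \<Rightarrow> A6 | A3 \<Rightarrow> A3 | A4 \<Rightarrow> A1 | A5 \<Rightarrow> A7 | A6 \<Rightarrow> A7 | A7 \<Rightarrow> A5)
  | A6 \<Rightarrow> (case y of A0 \<Rightarrow> A7 | A1 \<Rightarrow> A3 | A2 \<Rightarrow> A6 | A3 \<Rightarrow> A3 | A4 \<Rightarrow> A1 | A5 \<Rightarrow> A1 | A6 \<Rightarrow> A7 | A7 \<Rightarrow> A6)
  | A7 \<Rightarrow> (case y of A0 \<Rightarrow> A7 | A1 \<Rightarrow> A7 | A2 \<Rightarrow> A7 | A3 \<Rightarrow> A7 | A4 \<Rightarrow> A7 | A5 \<Rightarrow> A7 | A6 \<Rightarrow> A7 | A7 \<Rightarrow> A7))"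

definition leE :: "e \<Rightarrow> e \<Rightarrow> bool" where
  "leE x y = (case x of
    A0 \<Rightarrow> (case y of A0 \<Rightarrow> True | A1 \<Rightarrow> True | A2 \<Rightarrow> True | A3 \<Rightarrow> True | A4 \<Rightarrow> True | A5 \<Rightarrow> True | A6 \<Rightarrow> True | A7 \<Rightarrow> True)
  | A1 \<Rightarrow> (case y of A0 \<Rightarrow> False | A1 \<Rightarrow> True | A2 \<Rightarrow> False | A3 \<Rightarrow> False | A4 \<Rightarrow> False | A5 \<Rightarrow> False | A6 \<Rightarrow> False | A7 \<Rightarrow> True)
  | A2 \<Rightarrow> (case y of A0 \<Rightarrow> False | A1 \<Rightarrow> False | A2 \<Rightarrow> True | A3 \<Rightarrow> False | A4 \<Rightarrow> False | A5 \<Rightarrow> False | A6 \<Rightarrow> False | A7 \<Rightarrow> True)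
  | A3 \<Rightarrow> (case y of A0 \<Rightarrow> False | A1 \<Rightarrow> False | A2 \<Rightarrow> True | A3 \<Rightarrow> True | A4 \<Rightarrow> False | A5 \<Rightarrow> False | A6 \<Rightarrow> False | A7 \<Rightarrow> True)
  | A4 \<Rightarrow> (case y of A0 \<Rightarrow> False | A1 \<Rightarrow> True | A2 \<Rightarrow> True | A3 \<Rightarrow> True | A4 \<Rightarrow> True | A5 \<Rightarrow> False | A6 \<Rightarrow> False | A7 \<Rightarrow> True)
  | A5 \<Rightarrow> (case y of A0 \<Rightarrow> False | A1 \<Rightarrow> True | A2 \<Rightarrow> False | A3 \<Rightarrow> False | A4 \<Rightarrow> False | A5 \<Rightarrow> True | A6 \<Rightarrow> False | A7 \<Rightarrow> True)
  | A6 \<Rightarrow> (case y of A0 \<Rightarrow> False | A1 \<Rightarrow> True | A2 \<Rightarrow> False | A3 \<Rightarrow> False | A4 \<Rightarrow> False | A5 \<Rightarrow> True | A6 \<Rightarrow> True | A7 \<Rightarrow> True)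
  | A7 \<Rightarrow> (case y of A0 \<Rightarrow> False | A1 \<Rightarrow> False | A2 \<Rightarrow> False | A3 \<Rightarrow> False | A4 \<Rightarrow> False | A5 \<Rightarrow> False | A6 \<Rightarrow> False | A7 \<Rightarrow> True))"


definition M :: "nat \<Rightarrow> nat \<Rightarrow> nat" where "M x y = toN (mE (ofN x) (ofN y))"
definition RR :: "nat \<Rightarrow> nat \<Rightarrow> nat" where "RR x y = toN (rE (ofN x) (ofN y))"
definition LE :: "nat \<Rightarrow> nat \<Rightarrow> bool" where "LE x y = leE (ofN x) (ofN y)"

lemma ofN_num[simp]: "ofN 0 = A0" "ofN 1 = A1" "ofN (Suc 0) = A1" "ofN 2 = A2" "ofN 3 = A3" "ofN 4 = A4" "ofN 5 = A5" "ofN 6 = A6" "ofN 7 = A7"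
  by (simp_all add: ofN_def)

lemma p_refl: "\<forall>x\<in>{0..<8}. LE x x"
  unfolding ball_G LE_def all_e by (simp add: leE_def)
lemma p_anti: "\<forall>x\<in>{0..<8}. \<forall>y\<in>{0..<8}. LE x y \<and> LE y x \<longrightarrow> x = y"
  unfolding ball_G LE_def all_e by (simp add: leE_def)
lemma p_trans: "\<forall>x\<in>{0..<8}. \<forall>y\<in>{0..<8}. \<forall>w\<in>{0..<8}. LE x y \<and> LE y w \<longrightarrow> LE x w"
  unfolding ball_G LE_def all_e by (simp add: leE_def)
lemma p_bound: "\<forall>x\<in>{0..<8}. LE 0 x \<and> LE x 7"
  unfolding ball_G LE_def all_e by (simp add: leE_def)
lemma p_unit: "\<forall>x\<in>{0..<8}. M 7 x = x \<and> M x 7 = x"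
  unfolding ball_G M_def all_e by (simp add: mE_def)
lemma p_res: "\<forall>x\<in>{0..<8}. \<forall>y\<in>{0..<8}. \<forall>w\<in>{0..<8}. LE (M x y) w \<longleftrightarrow> LE x (RR w y)"
  unfolding ball_G LE_def M_def RR_def all_e by (simp add: leE_def mE_def rE_def)
lemma p_clos: "\<forall>x\<in>{0..<8}. \<forall>y\<in>{0..<8}. M x y \<in> {0..<8} \<and> RR x y \<in> {0..<8}"
  unfolding G_range M_def RR_def by auto
lemma p_div: "\<forall>x\<in>{0..<8}. \<forall>y\<in>{0..<8}. M (RR x y) y = M (RR y x) x"
  unfolding ball_G M_def RR_def all_e by (simp add: mE_def rE_def)
lemma p_dn: "\<forall>x\<in>{0..<8}. RR 0 (RR 0 x) = x"
  unfolding ball_G RR_def all_e by (simp add: rE_def)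
lemma p_nd: "\<not> (\<forall>x\<in>{0..<8}. \<forall>y\<in>{0..<8}. M x y = RR 0 (RR (RR 0 x) y))"
  unfolding ball_G M_def RR_def all_e by (simp add: mE_def rE_def)
lemma p_nb: "\<exists>x\<in>{0..<8}. \<exists>y\<in>{0..<8}.
       (\<lambda>x y. RR 0 (M (RR 0 x) (RR 0 y))) (RR 0 ((\<lambda>x y. RR 0 (M (RR 0 x) (RR 0 y))) (RR 0 x) y)) y \<noteq>
       (\<lambda>x y. RR 0 (M (RR 0 x) (RR 0 y))) (RR 0 ((\<lambda>x y. RR 0 (M (RR 0 x) (RR 0 y))) (RR 0 y) x)) x"
  unfolding bex_G M_def RR_def ex_e by (simp add: mE_def rE_def)

theorem mainTheorem9:
  shows "\<exists>(G :: nat set) le m r z u.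
    finite G \<and> card G = 8 \<and>
    lr_po_groupoid G le m r z u \<and>
    (\<forall>x\<in>G. \<forall>y\<in>G. m (r x y) y = m (r y x) x) \<and>
    (\<forall>x\<in>G. r z (r z x) = x) \<and>
    \<not> (\<forall>x\<in>G. \<forall>y\<in>G. m x y = r z (r (r z x) y)) \<and>
    \<not> basic_algebra G (\<lambda>x y. r z (m (r z x) (r z y))) (\<lambda>x. r z x) z \<and>
    (\<exists>x\<in>G. \<exists>y\<in>G.
       (\<lambda>x y. r z (m (r z x) (r z y))) (r z ((\<lambda>x y. r z (m (r z x) (r z y))) (r z x) y)) y \<noteq>
       (\<lambda>x y. r z (m (r z x) (r z y))) (r z ((\<lambda>x y. r z (m (r z x) (r z y))) (r z y) x)) x)"
  proof (intro exI conjI)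
  show "finite {0..<8::nat}" by simp
  show "card {0..<8::nat} = 8" by simp
  show "lr_po_groupoid {0..<8} LE M RR 0 7"
    unfolding lr_po_groupoid_def
    apply (intro conjI)
    apply simp
    apply simp
    apply (rule p_clos)
    apply (rule p_refl)
    apply (rule p_anti)
    apply (rule p_trans)
    apply (rule p_bound)
    apply (rule p_unit)
    apply (rule p_res)
    done
  show "\<forall>x\<in>{0..<8}. \<forall>y\<in>{0..<8}. M (RR x y) y = M (RR y x) x" by (rule p_div)
  show "\<forall>x\<in>{0..<8}. RR 0 (RR 0 x) = x" by (rule p_dn)
  show "\<not> (\<forall>x\<in>{0..<8}. \<forall>y\<in>{0..<8}. M x y = RR 0 (RR (RR 0 x) y))" by (rule p_nd)
  show "\<not> basic_algebra {0..<8} (\<lambda>x y. RR 0 (M (RR 0 x) (RR 0 y))) (\<lambda>x. RR 0 x) 0"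
  proof
    assume "basic_algebra {0..<8} (\<lambda>x y. RR 0 (M (RR 0 x) (RR 0 y))) (\<lambda>x. RR 0 x) 0"
    then have "\<forall>x\<in>{0..<8}. \<forall>y\<in>{0..<8}.
       (\<lambda>x y. RR 0 (M (RR 0 x) (RR 0 y))) (RR 0 ((\<lambda>x y. RR 0 (M (RR 0 x) (RR 0 y))) (RR 0 x) y)) y =
       (\<lambda>x y. RR 0 (M (RR 0 x) (RR 0 y))) (RR 0 ((\<lambda>x y. RR 0 (M (RR 0 x) (RR 0 y))) (RR 0 y) x)) x"
      unfolding basic_algebra_def by (elim conjE) assumption
    then show False using p_nb by blast
  qed
  show "\<exists>x\<in>{0..<8}. \<exists>y\<in>{0..<8}.
       (\<lambda>x y. RR 0 (M (RR 0 x) (RR 0 y))) (RR 0 ((\<lambda>x y. RR 0 (M (RR 0 x) (RR 0 y))) (RR 0 x) y)) y \<noteq>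
       (\<lambda>x y. RR 0 (M (RR 0 x) (RR 0 y))) (RR 0 ((\<lambda>x y. RR 0 (M (RR 0 x) (RR 0 y))) (RR 0 y) x)) x" by (rule p_nb)
qed

end
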